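(* Let $G$ be the linear quadratic output (LQO) system $\dot x(t)=Ax(t)+Bu(t)$, $y(t)=Cx(t)+\big[x(t)^TM_1x(t),\dots,x(t)^TM_px(t)\big]^T$, with $A\in\mathbb{R}^{n\times n}$ Hurwitz, $B\in\mathbb{R}^{n\times m}$, $C\in\mathbb{R}^{p\times n}$ and symmetric $M_i\in\mathbb{R}^{n\times n}$, and let $\omega>0$. Then $$\|G\|_{\mathcal{H}_{2,\omega}}=\sqrt{\operatorname{trace}(B^TQ_\omega B)},$$ where $Q_\omega$ is the frequency-limited observability Gramian defined in the context.
   Context: The transfer functions of $G$ are $G_1(s)=C(sI-A)^{-1}B$ and $G_{2,i}(s_1,s_2)=B^T(s_1I-A)^{-*}M_i(s_2I-A)^{-1}B$ for $i=1,\dots,p$, where ${}^*$ denotes conjugate transpose and $(\cdot)^{-*}=((\cdot)^{-1})^*$. The frequency-limited $\mathcal{H}_2$ norm on $[0,\omega]$ rad/sec is $$\|G\|_{\mathcal{H}_{2,\omega}}=\Big[\operatorname{trace}\Big(\frac{1}{2\pi}\int_{-\omega}^{\omega}G_1^*(j\nu)G_1(j\nu)\,d\nu+\frac{1}{(2\pi)^2}\int_{-\omega}^{\omega}\int_{-\omega}^{\omega}\sum_{i=1}^pG_{2,i}^*(j\nu_1,j\nu_2)G_{2,i}(j\nu_1,j\nu_2)\,d\nu_1d\nu_2\Big)\Big]^{1/2}.$$ The frequency-limited Gramians are $P_\omega=\frac{1}{2\pi}\int_{-\omega}^{\omega}(j\nu I-A)^{-1}BB^T(j\nu I-A)^{-*}d\nu$,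 $Y_\omega=\frac{1}{2\pi}\int_{-\omega}^{\omega}(j\nu I-A)^{-*}C^TC(j\nu I-A)^{-1}d\nu$, $Z_\omega=\frac{1}{2\pi}\int_{-\omega}^{\omega}(j\nu I-A)^{-*}\big(\sum_{i=1}^pM_iP_\omega M_i\big)(j\nu I-A)^{-1}d\nu$, and $Q_\omega=Y_\omega+Z_\omega$. *)

theory Defs
  imports "HOL-Analysis.Analysis"
begin

definition cmat :: "real^'c^'r \<Rightarrow> complex^'c^'r" where
  "cmat X = (\<chi> i j. complex_of_real (X $ i $ j))"

definition adj :: "complex^'c^'r \<Rightarrow> complex^'r^'c" where
  "adj X = (\<chi> i j. cnj (X $ j $ i))"

definition resolvent :: "complex \<Rightarrow> real^'n^'n \<Rightarrow> complex^'n^'n" where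
  "resolvent s A = matrix_inv (mat s - cmat A)"

definition hurwitz :: "real^'n^'n \<Rightarrow> bool" where
  "hurwitz A \<longleftrightarrow> (\<forall>(ev::complex) (v::complex^'n). v \<noteq> 0 \<and> cmat A *v v = ev *s v \<longrightarrow> Re ev < 0)"

definition G1 :: "real^'n^'n \<Rightarrow> real^'m^'n \<Rightarrow> real^'n^'p \<Rightarrow> complex \<Rightarrow> complex^'m^'p" where
  "G1 A B C s = cmat C ** resolvent s A ** cmat B"

definition G2 :: "real^'n^'n \<Rightarrow> real^'m^'n \<Rightarrow> real^'n^'n \<Rightarrow> complex \<Rightarrow> complex \<Rightarrow> complex^'m^'m" where
  "G2 A B Mi s1 s2 = cmat (transpose B) ** adj (resolvent s1 A) ** cmat Mi ** resolvent s2 A ** cmat B"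

definition H2w_norm :: "real^'n^'n \<Rightarrow> real^'m^'n \<Rightarrow> real^'n^'p \<Rightarrow> ('p \<Rightarrow> real^'n^'n) \<Rightarrow> real \<Rightarrow> real" where
  "H2w_norm A B C M w = sqrt (Re (trace (
      (1 / (2 * pi)) *\<^sub>R
        integral {-w..w} (\<lambda>\<nu>. adj (G1 A B C (\<i> * of_real \<nu>)) ** G1 A B C (\<i> * of_real \<nu>))
    + (1 / (2 * pi)^2) *\<^sub>R
        integral (cbox (-w, -w) (w, w)) (\<lambda>(\<nu>1, \<nu>2).
          \<Sum>i\<in>UNIV. adj (G2 A B (M i) (\<i> * of_real \<nu>1) (\<i> * of_real \<nu>2))
                       ** G2 A B (M i) (\<i> * of_real \<nu>1) (\<i> * of_real \<nu>2)))))"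

definition P_w :: "real^'n^'n \<Rightarrow> real^'m^'n \<Rightarrow> real \<Rightarrow> complex^'n^'n" where
  "P_w A B w = (1 / (2 * pi)) *\<^sub>R integral {-w..w}
     (\<lambda>\<nu>. resolvent (\<i> * of_real \<nu>) A ** cmat (B ** transpose B) ** adj (resolvent (\<i> * of_real \<nu>) A))"

definition Y_w :: "real^'n^'n \<Rightarrow> real^'n^'p \<Rightarrow> real \<Rightarrow> complex^'n^'n" where
  "Y_w A C w = (1 / (2 * pi)) *\<^sub>R integral {-w..w}
     (\<lambda>\<nu>. adj (resolvent (\<i> * of_real \<nu>) A) ** cmat (transpose C ** C) ** resolvent (\<i> * of_real \<nu>) A)"

definition Z_w :: "real^'n^'n \<Rightarrow> real^'m^'n \<Rightarrow> ('p::finite \<Rightarrow> real^'n^'n) \<Rightarrow> real \<Rightarrow> complex^'n^'n" where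
  "Z_w A B M w = (1 / (2 * pi)) *\<^sub>R integral {-w..w}
     (\<lambda>\<nu>. adj (resolvent (\<i> * of_real \<nu>) A)
           ** (\<Sum>i\<in>UNIV. cmat (M i) ** P_w A B w ** cmat (M i))
           ** resolvent (\<i> * of_real \<nu>) A)"

definition Q_w :: "real^'n^'n \<Rightarrow> real^'m^'n \<Rightarrow> real^'n^'p \<Rightarrow> ('p \<Rightarrow> real^'n^'n) \<Rightarrow> real \<Rightarrow> complex^'n^'n" where
  "Q_w A B C M w = Y_w A C w + Z_w A B M w"

end

theory Submission
  imports Defs
begin

lemma cmat_mult: "cmat (X ** Y) = cmat X ** cmat Y"
  by (simp add: cmat_def matrix_matrix_mult_def vec_eq_iff)
lemma adj_mult: "adj (X ** Y) = adj Y ** adj X"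
  by (simp add: adj_def matrix_matrix_mult_def vec_eq_iff mult.commute)
lemma adj_cmat: "adj (cmat X) = cmat (transpose X)"
  by (simp add: adj_def cmat_def transpose_def vec_eq_iff)
lemma adj_adj: "adj (adj X) = X"
  by (simp add: adj_def vec_eq_iff)
lemma matrix_scaleR_right: "(X::complex^'n^'m) ** (c *\<^sub>R Y) = c *\<^sub>R (X ** Y)"
  by (simp add: matrix_matrix_mult_def vec_eq_iff scaleR_sum_right)
lemma matrix_scaleR_left: "(c *\<^sub>R (X::complex^'n^'m)) ** Y = c *\<^sub>R (X ** Y)"
  by (simp add: matrix_matrix_mult_def vec_eq_iff scaleR_sum_right)
lemma matrix_add_rdistrib: "((B::complex^'n^'m) + C) ** A = B ** A + C ** A"
  by (simp add: matrix_matrix_mult_def vec_eq_iff sum.distrib ring_distribs)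
lemma matrix_sum_right: "finite I \<Longrightarrow> (X::complex^'n^'m) ** sum f I = (\<Sum>i\<in>I. X ** f i)"
  by (induction I rule: finite_induct) (auto simp: matrix_add_ldistrib)
lemma matrix_sum_left: "finite I \<Longrightarrow> sum f I ** (X::complex^'n^'m) = (\<Sum>i\<in>I. f i ** X)"
  by (induction I rule: finite_induct) (auto simp: matrix_add_rdistrib)

lemma bl_lmul: "bounded_linear (\<lambda>Z::complex^'k^'n. (X::complex^'n^'m) ** Z)"
  unfolding linear_conv_bounded_linear[symmetric]
  by (rule linearI) (auto simp: matrix_add_ldistrib matrix_scaleR_right)
lemma bl_rmul: "bounded_linear (\<lambda>Z::complex^'n^'m. Z ** (X::complex^'k^'n))"
  unfolding linear_conv_bounded_linear[symmetric]
  by (rule linearI) (auto simp: matrix_add_rdistrib matrix_scaleR_left)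

lemma integral_lmul: "f integrable_on S \<Longrightarrow> integral S (\<lambda>x. (X::complex^'n^'m) ** f x) = X ** integral S f"
  using integral_linear[OF _ bl_lmul, of f S X] by (simp add: o_def)
lemma integral_rmul: "f integrable_on S \<Longrightarrow> integral S (\<lambda>x. f x ** (X::complex^'k^'n)) = integral S f ** X"
  using integral_linear[OF _ bl_rmul, of f S X] by (simp add: o_def)

lemma continuous_on_matmul[continuous_intros]:
  fixes f :: "'a::topological_space \<Rightarrow> complex^'n^'m"
  shows "continuous_on S f \<Longrightarrow> continuous_on S g \<Longrightarrow> continuous_on S (\<lambda>x. f x ** g x)"
  unfolding matrix_matrix_mult_def
  by (intro continuous_intros continuous_on_component)
lemma continuous_on_adj[continuous_intros]:
  "continuous_on S f \<Longrightarrow> continuous_on S (\<lambda>x. adj (f x))"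
  unfolding adj_def
  by (intro continuous_intros continuous_on_component)
lemma continuous_on_det[continuous_intros]:
  fixes f :: "'a::topological_space \<Rightarrow> complex^'n^'n"
  shows "continuous_on S f \<Longrightarrow> continuous_on S (\<lambda>x. det (f x))"
  unfolding det_def
  by (intro continuous_intros continuous_on_component)


lemma mv_axis: "((M::complex^'n^'m) *v axis k 1) $ i = M $ i $ k"
  by (simp add: matrix_vector_mult_def axis_def if_distrib cong: if_cong)

lemma matrix_inv_right: "invertible (X::complex^'n^'n) \<Longrightarrow> X ** matrix_inv X = mat 1"
  unfolding invertible_def matrix_inv_def by (rule someI2_ex) auto

lemma inv_cramer:
  fixes X :: "complex^'n^'n"
  assumes "det X \<noteq> 0"
  shows "matrix_inv X = (\<chi> i k. det (\<chi> a b. if b = i then axis k 1 $ a else X$a$b) / det X)"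
proof -
  have inv: "invertible X" using assms invertible_det_nz by blast
  have "matrix_inv X $ i $ k = det (\<chi> a b. if b = i then axis k 1 $ a else X$a$b) / det X" for i k
  proof -
    have "X *v (matrix_inv X *v axis k 1) = axis k 1"
      by (simp add: matrix_vector_mul_assoc matrix_inv_right[OF inv])
    then have "matrix_inv X *v axis k 1 = (\<chi> j. det(\<chi> a b. if b=j then axis k 1 $a else X$a$b) / det X)"
      using cramer[OF assms] by blast
    then have "(matrix_inv X *v axis k 1) $ i = det(\<chi> a b. if b=i then axis k 1 $a else X$a$b) / det X"
      by simp
    then show ?thesis by (simp add: mv_axis)
  qed
  then show ?thesis by (simp add: vec_eq_iff)
qed

lemma hurwitz_det:
  assumes "hurwitz A"
  shows "det (mat (\<i> * of_real \<nu>) - cmat A) \<noteq> 0"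
proof
  assume "det (mat (\<i> * of_real \<nu>) - cmat A) = 0"
  then have "\<not> invertible (mat (\<i> * of_real \<nu>) - cmat A)" using invertible_det_nz by blast
  then obtain v where v: "(mat (\<i> * of_real \<nu>) - cmat A) *v v = 0" "v \<noteq> 0"
  proof -
    have "\<not> (\<exists>B. B ** (mat (\<i> * of_real \<nu>) - cmat A) = mat 1)"
      using \<open>\<not> invertible _\<close> invertible_left_inverse by blast
    then have "\<not> (\<forall>x. (mat (\<i> * of_real \<nu>) - cmat A) *v x = 0 \<longrightarrow> x = 0)"
      unfolding matrix_left_invertible_ker .
    then show ?thesis using that by blast
  qed
  have "cmat A *v v = (\<i> * of_real \<nu>) *s v"
  proof -
    have m: "mat (\<i> * of_real \<nu>) *v v = (\<i> * of_real \<nu>) *s v"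
    proof -
      have "(\<Sum>j\<in>UNIV. (if i = j then c else 0) * v $ j) = c * v $ i" for i and c :: complex
      proof -
        have "(\<lambda>j. (if i = j then c else 0) * v $ j) = (\<lambda>j. if i = j then c * v $ j else 0)" by auto
        then show ?thesis unfolding sum.delta by (simp only: sum.delta') simp
      qed
      then show ?thesis by (simp add: vec_eq_iff matrix_vector_mult_def mat_def)
    qed
    have "(mat (\<i> * of_real \<nu>) - cmat A) *v v = mat (\<i> * of_real \<nu>) *v v - cmat A *v v"
      by (simp add: vec_eq_iff matrix_vector_mult_def sum_subtractf left_diff_distrib)
    with v(1) m show ?thesis by simp
  qed
  then show False using assms v(2) unfolding hurwitz_def by force
qed

lemma cont_repl:
  fixes X :: "'a::topological_space \<Rightarrow> complex^'n^'n"
  assumes "continuous_on S X"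
  shows "continuous_on S (\<lambda>x. \<chi> a b. if b = i then c a else X x $ a $ b)"
  apply (intro continuous_on_vec_lambda)
  subgoal for a b by (cases "b = i") (simp_all add: continuous_on_const continuous_on_component assms)
  done

lemma resolvent_cont:
  assumes "hurwitz A"
  shows "continuous_on UNIV (\<lambda>\<nu>::real. resolvent (\<i> * of_real \<nu>) A)"
proof -
  have eq: "(\<lambda>\<nu>::real. resolvent (\<i> * of_real \<nu>) A) = (\<lambda>\<nu>. (\<chi> i k. det (\<chi> a b. if b = i then axis k 1 $ a else (mat (\<i> * of_real \<nu>) - cmat A)$a$b) / det (mat (\<i> * of_real \<nu>) - cmat A)))"
    unfolding resolvent_def using inv_cramer[OF hurwitz_det[OF assms]] by auto
  have c: "continuous_on UNIV (\<lambda>\<nu>::real. mat (\<i> * of_real \<nu>) - cmat A :: complex^'a^'a)"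
    unfolding mat_def
    apply (intro continuous_intros continuous_on_vec_lambda)
    subgoal for i j by (cases "i = j") (simp_all add: continuous_on_const continuous_on_mult continuous_on_of_real_id)
    done
  have d1: "continuous_on UNIV (\<lambda>\<nu>::real. det (mat (\<i> * of_real \<nu>) - cmat A :: complex^'a^'a))"
    by (rule continuous_on_det[OF c])
  have d2: "continuous_on UNIV (\<lambda>\<nu>::real. det (\<chi> a b. if b = i then axis k 1 $ a else (mat (\<i> * of_real \<nu>) - cmat A :: complex^'a^'a)$a$b))" for i k
    by (intro continuous_on_det cont_repl c)
  show ?thesis unfolding eq
    apply (intro continuous_on_vec_lambda continuous_on_divide d1 d2)
    using hurwitz_det[OF assms] by auto
qed


lemma Rcomp[continuous_intros]:
  assumes "hurwitz A" "continuous_on S g"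
  shows "continuous_on S (\<lambda>x. resolvent (\<i> * of_real (g x)) A)"
  using continuous_on_compose2[OF resolvent_cont[OF assms(1)] assms(2)] by auto

lemma integral_lrmul: "f integrable_on S \<Longrightarrow>
   integral S (\<lambda>x. (X::complex^'n^'m) ** f x ** (Y::complex^'k^'j)) = X ** integral S f ** Y"
proof -
  assume f: "f integrable_on S"
  have "(\<lambda>x. X ** f x) integrable_on S"
    using integrable_linear[OF f bl_lmul] by (simp add: o_def)
  then show ?thesis using integral_rmul integral_lmul[OF f] by metis
qed

lemma cont_int: "continuous_on {a..b} (f::real \<Rightarrow> complex^'n^'m) \<Longrightarrow> f integrable_on {a..b}"
  by (rule integrable_continuous_interval)


theorem proposition1:
  fixes A :: "real^'n^'n" and B :: "real^'m^'n" and C :: "real^'n^'p"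
    and M :: "'p \<Rightarrow> real^'n^'n" and w :: real
  assumes "hurwitz A"
    and "\<And>i. transpose (M i) = M i"
    and "w > 0"
  shows "H2w_norm A B C M w = sqrt (Re (trace (cmat (transpose B) ** Q_w A B C M w ** cmat B)))"
proof -
  note hw = assms(1)
  define R where "R = (\<lambda>\<nu>::real. resolvent (\<i> * of_real \<nu>) A)"
  have Rc: "continuous_on S (\<lambda>x. R (g x))" if "continuous_on S g" for S and g :: "'z::topological_space \<Rightarrow> real"
    unfolding R_def by (rule Rcomp[OF hw that])
  define cB where "cB = cmat B"
  define cBt where "cBt = cmat (transpose B)"
  define F1 where "F1 = (\<lambda>\<nu>. adj (R \<nu>) ** cmat (transpose C ** C) ** R \<nu>)"
  define K where "K = (\<lambda>\<nu>. R \<nu> ** cmat (B ** transpose B) ** adj (R \<nu>))"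
  define P where "P = P_w A B w"
  define W where "W = (\<lambda>\<nu>. adj (R \<nu>) ** (\<Sum>i\<in>UNIV. cmat (M i) ** P ** cmat (M i)) ** R \<nu>)"
  have F1c: "continuous_on S F1" for S
    unfolding F1_def by (intro continuous_intros Rc continuous_on_id)
  have Kc: "continuous_on S K" for S
    unfolding K_def by (intro continuous_intros Rc continuous_on_id)
  have Wc: "continuous_on S W" for S
    unfolding W_def by (intro continuous_intros Rc continuous_on_id)
  have Pdef: "P = (1 / (2 * pi)) *\<^sub>R integral {-w..w} K"
    unfolding P_def P_w_def K_def R_def ..
  have Ydef: "Y_w A C w = (1 / (2 * pi)) *\<^sub>R integral {-w..w} F1"
    unfolding Y_w_def F1_def R_def ..
  have Zdef: "Z_w A B M w = (1 / (2 * pi)) *\<^sub>R integral {-w..w} W"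
    unfolding Z_w_def W_def R_def P_def ..
  have e1: "adj (G1 A B C (\<i> * of_real \<nu>)) ** G1 A B C (\<i> * of_real \<nu>) = cBt ** F1 \<nu> ** cB" for \<nu>
    unfolding G1_def F1_def R_def cB_def cBt_def
    by (simp add: adj_mult adj_cmat cmat_mult matrix_mul_assoc)
  have part1: "(1 / (2 * pi)) *\<^sub>R integral {-w..w} (\<lambda>\<nu>. adj (G1 A B C (\<i> * of_real \<nu>)) ** G1 A B C (\<i> * of_real \<nu>))
      = cBt ** Y_w A C w ** cB"
    unfolding e1 Ydef
    by (simp add: integral_lrmul[OF cont_int[OF F1c]] matrix_scaleR_left matrix_scaleR_right)
  define H where "H = (\<lambda>\<nu>1 \<nu>2. \<Sum>i\<in>UNIV. adj (G2 A B (M i) (\<i> * of_real \<nu>1) (\<i> * of_real \<nu>2))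
                       ** G2 A B (M i) (\<i> * of_real \<nu>1) (\<i> * of_real \<nu>2))"
  have Msym: "cmat (transpose (M i)) = cmat (M i)" for i using assms(2) by simp
  have e2: "H \<nu>1 \<nu>2 = (\<Sum>i\<in>UNIV. (cBt ** adj (R \<nu>2) ** cmat (M i)) ** K \<nu>1 ** (cmat (M i) ** R \<nu>2 ** cB))" for \<nu>1 \<nu>2
    unfolding H_def G2_def K_def R_def cB_def cBt_def
    by (simp add: adj_mult adj_cmat cmat_mult matrix_mul_assoc adj_adj Msym)
  have Hc: "continuous_on S (\<lambda>p. H (f p) (g p))" if "continuous_on S f" "continuous_on S g"
    for S and f g :: "'z::topological_space \<Rightarrow> real"
    unfolding e2 K_def by (intro continuous_intros Rc that)
  have Hc1: "continuous_on (cbox (-w, -w) (w, w)) (\<lambda>(x, y). H x y)"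
    using Hc[of _ fst snd] by (simp add: case_prod_beta' continuous_on_fst continuous_on_snd continuous_on_id)
  have Hc2: "continuous_on (cbox (-w, -w) (w, w)) (\<lambda>(x, y). H y x)"
    using Hc[of _ snd fst] by (simp add: case_prod_beta' continuous_on_fst continuous_on_snd continuous_on_id)
  have swap: "integral (cbox (-w, -w) (w, w)) (\<lambda>(x, y). H x y) = integral {-w..w} (\<lambda>x. integral {-w..w} (\<lambda>y. H y x))"
    using integral_swap_2dim[OF Hc1] integral_prod_continuous[OF Hc2] by simp
  have inner: "integral {-w..w} (\<lambda>y. H y x) = (2 * pi) *\<^sub>R (cBt ** W x ** cB)" for x
  proof -
    have "integral {-w..w} (\<lambda>y. H y x) = (\<Sum>i\<in>UNIV. (cBt ** adj (R x) ** cmat (M i)) ** integral {-w..w} K ** (cmat (M i) ** R x ** cB))"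
      unfolding e2
      by (subst integral_sum) (auto intro!: integrable_continuous_interval continuous_intros Kc simp: integral_lrmul[OF cont_int[OF Kc]])
    also have "integral {-w..w} K = (2 * pi) *\<^sub>R P"
      unfolding Pdef by simp
    finally show ?thesis
      unfolding W_def
      by (simp add: matrix_sum_left matrix_sum_right matrix_mul_assoc matrix_scaleR_left matrix_scaleR_right scaleR_sum_right)
  qed
  have part2: "(1 / (2 * pi)^2) *\<^sub>R integral (cbox (-w, -w) (w, w)) (\<lambda>(\<nu>1, \<nu>2). H \<nu>1 \<nu>2)
      = cBt ** Z_w A B M w ** cB"
    unfolding swap inner Zdef
    by (simp add: integral_lrmul[OF cont_int[OF Wc]] matrix_scaleR_left matrix_scaleR_right power2_eq_square)
  have part2': "(1 / (2 * pi)^2) *\<^sub>R integral (cbox (-w, -w) (w, w)) (\<lambda>(\<nu>1, \<nu>2).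
          \<Sum>i\<in>UNIV. adj (G2 A B (M i) (\<i> * of_real \<nu>1) (\<i> * of_real \<nu>2))
                       ** G2 A B (M i) (\<i> * of_real \<nu>1) (\<i> * of_real \<nu>2)) = cBt ** Z_w A B M w ** cB"
    using part2 unfolding H_def .
  show ?thesis
    unfolding H2w_norm_def part1 part2' Q_w_def cBt_def[symmetric] cB_def[symmetric]
    by (simp only: matrix_add_ldistrib matrix_add_rdistrib)
qed

end
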